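(* Let $(E,C)$ be a separated graph with $E^0$ and $E^1$ countable, let $S\subseteq C_{fin}$ and let $K$ be a field. Then there exist an interval (possibly unbounded) $\mathfrak{X}\subseteq\mathbb{R}$ and an $(E,C,S)$-algebraic branching system $(\mathfrak{X},\{R_e\}_{e\in E^1},\{D_v\}_{v\in E^0},\{f_e\}_{e\in E^1})$ satisfying, for every non-sink $v$: (i) $R_e\cap R_f\neq\emptyset$ for $e\in X$, $f\in Y$, $X,Y\in C_v$, $X\neq Y$; (ii) $\bigcup_{e\in X}R_e\subsetneq D_v$ for each $X\in C_v\setminus S$; (iii) $\bigcup_{e\in X}R_e\neq\bigcup_{f\in Y}R_f$ for $X,Y\in C_v\setminus S$, $X\neq Y$; together with a $K$-algebra homomorphism $\pi:L_K(E,C,S)\to \mathrm{Hom}_K(M)$, where $M$ is the $K$-module of all functions $\mathfrak{X}\to K$, such that for all $\phi\in M$, $v\in E^0$, $e\in E^1$: $$\pi(v)(\phi)=\chi_{D_v}\cdot\phi,\qquad \pi(e)(\phi)=\chi_{R_e}\cdot \phi\circ f_e^{-1},\qquad \pi(e^* )(\phi)=\chi_{D_{r(e)}}\cdot\phi\circ f_e.$$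
   Context: A separated graph is a pair $(E,C)$ where $E=(E^0,E^1,r,s)$ is a directed graph and $C=\bigcup_{v\in E^0}C_v$, where for each non-sink $v$, $C_v$ is a partition of $s^{-1}(v)$ into pairwise disjoint nonempty sets; $C_{fin}$ is the set of finite $Y\in C$. For $S\subseteq C_{fin}$ and a field $K$, the Cohn-Leavitt algebra $L_K(E,C,S)$ is the universal $K$-algebra generated by pairwise orthogonal idempotents $\{v:v\in E^0\}$ and elements $\{e,e^*:e\in E^1\}$ subject to: $s(e)e=er(e)=e$; $r(e)e^*=e^*s(e)=e^*$; $e^*f=\delta_{e,f}r(e)$ for $e,f\in Y$, $Y\in C$; $v=\sum_{e\in X}ee^*$ for every $X\in S\cap C_v$, $v$ non-sink. An $(E,C,S)$-algebraic branching system is a set $\mathfrak{X}$ with subsets $\{R_e\}_{e\in E^1}$, $\{D_v\}_{v\in E^0}$ and maps $f_e$ such that: $R_e\cap R_d=\emptyset$ for distinct $d,e$ in a common $Y\in C$; the $D_v$ are pairwise disjoint; $R_e\subseteq D_{s(e)}$; $D_v=\bigcup_{e\in Y}R_e$ whenever $Y\in S\cap C_v$; each $f_e:D_{r(e)}\to R_e$ is a bijection. Notation: $\chi_{R_e}\cdot\phi\circ f_e^{-1}$ denotes the function equal to $\phi(f_e^{-1}(x))$ for $x\in R_e$ and $0$ otherwise; $\chi_{D_{r(e)}}\cdot\phi\circ f_e$ denotes the function equal to $\phi(f_e(x))$ for $x\in D_{r(e)}$ and $0$ otherwise; $\chi_{D_v}$ is the characteristic function of $D_v$. *)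

theory Defs
  imports "HOL-Analysis.Analysis"
begin

definition nonsink :: "'v set \<Rightarrow> 'e set \<Rightarrow> ('e \<Rightarrow> 'v) \<Rightarrow> 'v \<Rightarrow> bool" where
  "nonsink E0 E1 s v \<longleftrightarrow> v \<in> E0 \<and> (\<exists>e\<in>E1. s e = v)"

definition separated_graph ::
  "'v set \<Rightarrow> 'e set \<Rightarrow> ('e \<Rightarrow> 'v) \<Rightarrow> ('e \<Rightarrow> 'v) \<Rightarrow> ('v \<Rightarrow> 'e set set) \<Rightarrow> bool" where
  "separated_graph E0 E1 r s C \<longleftrightarrow>
     s ` E1 \<subseteq> E0 \<and> r ` E1 \<subseteq> E0 \<and>
     (\<forall>v. \<not> nonsink E0 E1 s v \<longrightarrow> C v = {}) \<and>
     (\<forall>v. nonsink E0 E1 s v \<longrightarrow>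
        \<Union>(C v) = {e \<in> E1. s e = v} \<and>
        (\<forall>X\<in>C v. X \<noteq> {}) \<and>
        (\<forall>X\<in>C v. \<forall>Y\<in>C v. X \<noteq> Y \<longrightarrow> X \<inter> Y = {}))"

definition sg_C :: "'v set \<Rightarrow> ('v \<Rightarrow> 'e set set) \<Rightarrow> 'e set set" where
  "sg_C E0 C = (\<Union>v\<in>E0. C v)"

definition sg_Cfin :: "'v set \<Rightarrow> ('v \<Rightarrow> 'e set set) \<Rightarrow> 'e set set" where
  "sg_Cfin E0 C = {X \<in> sg_C E0 C. finite X}"

datatype ('v, 'e) clgen = GV 'v | GE 'e | GS 'e   \<comment> \<open>v, e, e^*\<close>

definition gens :: "'v set \<Rightarrow> 'e set \<Rightarrow> ('v, 'e) clgen set" where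
  "gens E0 E1 = GV ` E0 \<union> GE ` E1 \<union> GS ` E1"

text \<open>Elements of the free non-unital K-algebra on the generators: finitely supported
  K-valued functions on nonempty words over the generators.\<close>
definition free_alg :: "'v set \<Rightarrow> 'e set \<Rightarrow> (('v, 'e) clgen list \<Rightarrow> 'k::field) set" where
  "free_alg E0 E1 = {p. finite {w. p w \<noteq> 0} \<and> p [] = 0 \<and>
                        (\<forall>w. p w \<noteq> 0 \<longrightarrow> set w \<subseteq> gens E0 E1)}"

definition fa_add :: "('g list \<Rightarrow> 'k::field) \<Rightarrow> ('g list \<Rightarrow> 'k) \<Rightarrow> 'g list \<Rightarrow> 'k" where
  "fa_add p q = (\<lambda>w. p w + q w)"

definition fa_smult :: "'k::field \<Rightarrow> ('g list \<Rightarrow> 'k) \<Rightarrow> 'g list \<Rightarrow> 'k" where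
  "fa_smult c p = (\<lambda>w. c * p w)"

definition fa_mult :: "('g list \<Rightarrow> 'k::field) \<Rightarrow> ('g list \<Rightarrow> 'k) \<Rightarrow> 'g list \<Rightarrow> 'k" where
  "fa_mult p q = (\<lambda>w. \<Sum>i\<in>{0..length w}. p (take i w) * q (drop i w))"

definition mon :: "'g list \<Rightarrow> 'g list \<Rightarrow> 'k::field" where
  "mon u = (\<lambda>w. if w = u then 1 else 0)"

definition fa_diff :: "('g list \<Rightarrow> 'k::field) \<Rightarrow> ('g list \<Rightarrow> 'k) \<Rightarrow> 'g list \<Rightarrow> 'k" where
  "fa_diff p q = (\<lambda>w. p w - q w)"

text \<open>The defining relations of L_K(E,C,S) (each relation "a = b" is encoded as a - b).\<close>
definition CL_rels ::
  "'v set \<Rightarrow> 'e set \<Rightarrow> ('e \<Rightarrow> 'v) \<Rightarrow> ('e \<Rightarrow> 'v) \<Rightarrow> ('v \<Rightarrow> 'e set set) \<Rightarrow> 'e set set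
   \<Rightarrow> (('v, 'e) clgen list \<Rightarrow> 'k::field) set" where
  "CL_rels E0 E1 r s C S =
     {fa_diff (mon [GV v, GV w]) (if v = w then mon [GV v] else (\<lambda>_. 0)) | v w. v \<in> E0 \<and> w \<in> E0}
   \<union> {fa_diff (mon [GV (s e), GE e]) (mon [GE e]) | e. e \<in> E1}
   \<union> {fa_diff (mon [GE e, GV (r e)]) (mon [GE e]) | e. e \<in> E1}
   \<union> {fa_diff (mon [GV (r e), GS e]) (mon [GS e]) | e. e \<in> E1}
   \<union> {fa_diff (mon [GS e, GV (s e)]) (mon [GS e]) | e. e \<in> E1}
   \<union> {fa_diff (mon [GS e, GE f]) (if e = f then mon [GV (r e)] else (\<lambda>_. 0)) | e f Y.
        Y \<in> sg_C E0 C \<and> e \<in> Y \<and> f \<in> Y}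
   \<union> {fa_diff (mon [GV v]) (\<lambda>w. \<Sum>e\<in>X. mon [GE e, GS e] w) | v X.
        nonsink E0 E1 s v \<and> X \<in> S \<and> X \<in> C v}"

inductive_set CL_ideal ::
  "'v set \<Rightarrow> 'e set \<Rightarrow> ('e \<Rightarrow> 'v) \<Rightarrow> ('e \<Rightarrow> 'v) \<Rightarrow> ('v \<Rightarrow> 'e set set) \<Rightarrow> 'e set set
   \<Rightarrow> (('v, 'e) clgen list \<Rightarrow> 'k::field) set"
  for E0 E1 r s C S where
  rel: "a \<in> CL_rels E0 E1 r s C S \<Longrightarrow> a \<in> CL_ideal E0 E1 r s C S"
| zero: "(\<lambda>_. 0) \<in> CL_ideal E0 E1 r s C S"
| add: "a \<in> CL_ideal E0 E1 r s C S \<Longrightarrow> b \<in> CL_ideal E0 E1 r s C S \<Longrightarrow>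
        fa_add a b \<in> CL_ideal E0 E1 r s C S"
| smult: "a \<in> CL_ideal E0 E1 r s C S \<Longrightarrow> fa_smult c a \<in> CL_ideal E0 E1 r s C S"
| lmult: "a \<in> CL_ideal E0 E1 r s C S \<Longrightarrow> x \<in> free_alg E0 E1 \<Longrightarrow>
        fa_mult x a \<in> CL_ideal E0 E1 r s C S"
| rmult: "a \<in> CL_ideal E0 E1 r s C S \<Longrightarrow> x \<in> free_alg E0 E1 \<Longrightarrow>
        fa_mult a x \<in> CL_ideal E0 E1 r s C S"

definition CL_cong ::
  "'v set \<Rightarrow> 'e set \<Rightarrow> ('e \<Rightarrow> 'v) \<Rightarrow> ('e \<Rightarrow> 'v) \<Rightarrow> ('v \<Rightarrow> 'e set set) \<Rightarrow> 'e set set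
   \<Rightarrow> ((('v, 'e) clgen list \<Rightarrow> 'k::field) \<times> (('v, 'e) clgen list \<Rightarrow> 'k)) set" where
  "CL_cong E0 E1 r s C S = {(a, b). a \<in> free_alg E0 E1 \<and> b \<in> free_alg E0 E1 \<and>
                                     fa_diff a b \<in> CL_ideal E0 E1 r s C S}"

definition CL_class ::
  "'v set \<Rightarrow> 'e set \<Rightarrow> ('e \<Rightarrow> 'v) \<Rightarrow> ('e \<Rightarrow> 'v) \<Rightarrow> ('v \<Rightarrow> 'e set set) \<Rightarrow> 'e set set
   \<Rightarrow> (('v, 'e) clgen list \<Rightarrow> 'k::field) \<Rightarrow> (('v, 'e) clgen list \<Rightarrow> 'k) set" where
  "CL_class E0 E1 r s C S a = CL_cong E0 E1 r s C S `` {a}"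

definition CL_algebra ::
  "'v set \<Rightarrow> 'e set \<Rightarrow> ('e \<Rightarrow> 'v) \<Rightarrow> ('e \<Rightarrow> 'v) \<Rightarrow> ('v \<Rightarrow> 'e set set) \<Rightarrow> 'e set set
   \<Rightarrow> (('v, 'e) clgen list \<Rightarrow> 'k::field) set set" where
  "CL_algebra E0 E1 r s C S = free_alg E0 E1 // CL_cong E0 E1 r s C S"

text \<open>M is represented as the functions X \<Rightarrow> K, i.e. real-valued-domain functions vanishing
  outside X. An element of Hom_K(M) is a K-linear self-map of M (compared on M).\<close>
definition fun_module :: "real set \<Rightarrow> (real \<Rightarrow> 'k::field) set" where
  "fun_module X = {\<phi>. \<forall>x. x \<notin> X \<longrightarrow> \<phi> x = 0}"

definition is_endo :: "(real \<Rightarrow> 'k::field) set \<Rightarrow> ((real \<Rightarrow> 'k) \<Rightarrow> (real \<Rightarrow> 'k)) \<Rightarrow> bool" where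
  "is_endo M T \<longleftrightarrow> (\<forall>\<phi>\<in>M. T \<phi> \<in> M) \<and>
     (\<forall>\<phi>\<in>M. \<forall>\<psi>\<in>M. T (\<lambda>x. \<phi> x + \<psi> x) = (\<lambda>x. T \<phi> x + T \<psi> x)) \<and>
     (\<forall>c. \<forall>\<phi>\<in>M. T (\<lambda>x. c * \<phi> x) = (\<lambda>x. c * T \<phi> x))"

text \<open>\<pi> is a K-algebra homomorphism L_K(E,C,S) \<rightarrow> Hom_K(M), the operations of L_K being
  induced by those of the free algebra on representatives.\<close>
definition CL_hom ::
  "'v set \<Rightarrow> 'e set \<Rightarrow> ('e \<Rightarrow> 'v) \<Rightarrow> ('e \<Rightarrow> 'v) \<Rightarrow> ('v \<Rightarrow> 'e set set) \<Rightarrow> 'e set set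
   \<Rightarrow> real set \<Rightarrow> ((('v, 'e) clgen list \<Rightarrow> 'k::field) set \<Rightarrow> (real \<Rightarrow> 'k) \<Rightarrow> (real \<Rightarrow> 'k)) \<Rightarrow> bool" where
  "CL_hom E0 E1 r s C S X \<pi> \<longleftrightarrow>
     (let cls = CL_class E0 E1 r s C S; M = fun_module X in
       (\<forall>A\<in>CL_algebra E0 E1 r s C S. is_endo M (\<pi> A)) \<and>
       (\<forall>a\<in>free_alg E0 E1. \<forall>b\<in>free_alg E0 E1. \<forall>\<phi>\<in>M.
          \<pi> (cls (fa_add a b)) \<phi> = (\<lambda>x. \<pi> (cls a) \<phi> x + \<pi> (cls b) \<phi> x)) \<and>
       (\<forall>c. \<forall>a\<in>free_alg E0 E1. \<forall>\<phi>\<in>M.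
          \<pi> (cls (fa_smult c a)) \<phi> = (\<lambda>x. c * \<pi> (cls a) \<phi> x)) \<and>
       (\<forall>a\<in>free_alg E0 E1. \<forall>b\<in>free_alg E0 E1. \<forall>\<phi>\<in>M.
          \<pi> (cls (fa_mult a b)) \<phi> = \<pi> (cls a) (\<pi> (cls b) \<phi>)))"

definition branching_system ::
  "'v set \<Rightarrow> 'e set \<Rightarrow> ('e \<Rightarrow> 'v) \<Rightarrow> ('e \<Rightarrow> 'v) \<Rightarrow> ('v \<Rightarrow> 'e set set) \<Rightarrow> 'e set set
   \<Rightarrow> 'x set \<Rightarrow> ('e \<Rightarrow> 'x set) \<Rightarrow> ('v \<Rightarrow> 'x set) \<Rightarrow> ('e \<Rightarrow> 'x \<Rightarrow> 'x) \<Rightarrow> bool" where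
  "branching_system E0 E1 r s C S X R D f \<longleftrightarrow>
     (\<forall>e\<in>E1. R e \<subseteq> X) \<and> (\<forall>v\<in>E0. D v \<subseteq> X) \<and>
     (\<forall>Y\<in>sg_C E0 C. \<forall>d\<in>Y. \<forall>e\<in>Y. d \<noteq> e \<longrightarrow> R d \<inter> R e = {}) \<and>
     (\<forall>v\<in>E0. \<forall>w\<in>E0. v \<noteq> w \<longrightarrow> D v \<inter> D w = {}) \<and>
     (\<forall>e\<in>E1. R e \<subseteq> D (s e)) \<and>
     (\<forall>v\<in>E0. \<forall>Y\<in>S. Y \<in> C v \<longrightarrow> D v = (\<Union>e\<in>Y. R e)) \<and>
     (\<forall>e\<in>E1. bij_betw (f e) (D (r e)) (R e))"

end

theory Submission
  imports Defs
begin


definition supp :: "('g list \<Rightarrow> 'k::field) \<Rightarrow> 'g list set" where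
  "supp p = {w. p w \<noteq> 0}"

abbreviation fin :: "('g list \<Rightarrow> 'k::field) \<Rightarrow> bool" where
  "fin p \<equiv> finite (supp p)"

lemma fin_add: "fin a \<Longrightarrow> fin b \<Longrightarrow> fin (fa_add a b)"
  by (rule finite_subset[of _ "supp a \<union> supp b"]) (auto simp: supp_def fa_add_def)
lemma fin_smult: "fin a \<Longrightarrow> fin (fa_smult c a)"
  by (rule finite_subset[of _ "supp a"]) (auto simp: supp_def fa_smult_def)
lemma fin_diff: "fin a \<Longrightarrow> fin b \<Longrightarrow> fin (fa_diff a b)"
  by (rule finite_subset[of _ "supp a \<union> supp b"]) (auto simp: supp_def fa_diff_def)
lemma supp_mon: "supp (mon u :: 'g list \<Rightarrow> 'k::field) = {u}"
  by (auto simp: supp_def mon_def)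
lemma fin_mon: "fin (mon u :: 'g list \<Rightarrow> 'k::field)"
  by (simp add: supp_mon)
lemma fin_zero: "fin (\<lambda>_. 0::'k::field)"
  by (simp add: supp_def)

lemma supp_mult: "supp (fa_mult a b) \<subseteq> (\<lambda>p. fst p @ snd p) ` (supp a \<times> supp b)"
proof
  fix w assume "w \<in> supp (fa_mult a b)"
  then have "(\<Sum>i\<in>{0..length w}. a (take i w) * b (drop i w)) \<noteq> 0"
    by (simp add: supp_def fa_mult_def)
  then obtain i where "a (take i w) * b (drop i w) \<noteq> 0"
    by (meson sum.neutral)
  then have "(take i w, drop i w) \<in> supp a \<times> supp b" by (simp add: supp_def)
  then show "w \<in> (\<lambda>p. fst p @ snd p) ` (supp a \<times> supp b)"
    using image_eqI[of w "\<lambda>p. fst p @ snd p" "(take i w, drop i w)"] by simp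
qed

lemma fin_mult: assumes "fin a" "fin b" shows "fin (fa_mult a b)"
  using finite_subset[OF supp_mult finite_imageI[OF finite_cartesian_product[OF assms]]] .

lemma free_alg_fin: "p \<in> free_alg E0 E1 \<Longrightarrow> fin p"
  by (simp add: free_alg_def supp_def)

lemma free_alg_add: "a \<in> free_alg E0 E1 \<Longrightarrow> b \<in> free_alg E0 E1 \<Longrightarrow> fa_add a b \<in> free_alg E0 E1"
proof -
  assume a: "a \<in> free_alg E0 E1" and b: "b \<in> free_alg E0 E1"
  have "fin (fa_add a b)" using fin_add free_alg_fin a b by blast
  moreover have "fa_add a b [] = 0" using a b by (simp add: fa_add_def free_alg_def)
  moreover have "set w \<subseteq> gens E0 E1" if "fa_add a b w \<noteq> 0" for w
  proof -
    have "a w \<noteq> 0 \<or> b w \<noteq> 0" using that by (auto simp: fa_add_def)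
    then show ?thesis using a b unfolding free_alg_def by blast
  qed
  ultimately show ?thesis by (simp add: free_alg_def supp_def)
qed

lemma free_alg_smult: "a \<in> free_alg E0 E1 \<Longrightarrow> fa_smult c a \<in> free_alg E0 E1"
proof -
  assume a: "a \<in> free_alg E0 E1"
  have "fin (fa_smult c a)" using fin_smult free_alg_fin a by blast
  moreover have "fa_smult c a [] = 0" using a by (simp add: fa_smult_def free_alg_def)
  moreover have "set w \<subseteq> gens E0 E1" if "fa_smult c a w \<noteq> 0" for w
  proof -
    have "a w \<noteq> 0" using that by (auto simp: fa_smult_def)
    then show ?thesis using a unfolding free_alg_def by blast
  qed
  ultimately show ?thesis by (simp add: free_alg_def supp_def)
qed

lemma free_alg_mult: "a \<in> free_alg E0 E1 \<Longrightarrow> b \<in> free_alg E0 E1 \<Longrightarrow> fa_mult a b \<in> free_alg E0 E1"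
proof -
  assume a: "a \<in> free_alg E0 E1" and b: "b \<in> free_alg E0 E1"
  have "fin (fa_mult a b)" using fin_mult free_alg_fin a b by blast
  moreover have "fa_mult a b [] = 0" using a by (simp add: fa_mult_def free_alg_def)
  moreover have "set w \<subseteq> gens E0 E1" if "fa_mult a b w \<noteq> 0" for w
  proof -
    from that have "w \<in> supp (fa_mult a b)" by (simp add: supp_def)
    then obtain p where p: "p \<in> supp a \<times> supp b" "w = fst p @ snd p"
      using supp_mult[of a b] by blast
    then have "a (fst p) \<noteq> 0" "b (snd p) \<noteq> 0" by (auto simp: supp_def)
    then show ?thesis using a b p(2) by (auto simp: free_alg_def)
  qed
  ultimately show ?thesis by (simp add: free_alg_def supp_def)
qed

lemma split_sum:
  assumes "finite Fa" "finite Fb" "supp a \<subseteq> Fa" "supp b \<subseteq> Fb"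
  shows "(\<Sum>i\<in>{0..length w}. a (take i w) * b (drop i w)) =
         (\<Sum>p\<in>{p\<in>Fa \<times> Fb. fst p @ snd p = w}. a (fst p) * b (snd p))"
proof -
  let ?h = "\<lambda>i. (take i w, drop i w)"
  have inj: "inj_on ?h {0..length w}"
  proof (rule inj_onI)
    fix i j assume i: "i \<in> {0..length w}" and j: "j \<in> {0..length w}"
      and eq: "(take i w, drop i w) = (take j w, drop j w)"
    then have "length (take i w) = length (take j w)" by simp
    then show "i = j" using i j by simp
  qed
  have img: "?h ` {0..length w} = {p. fst p @ snd p = w}"
  proof
    show "?h ` {0..length w} \<subseteq> {p. fst p @ snd p = w}" by auto
    show "{p. fst p @ snd p = w} \<subseteq> ?h ` {0..length w}"
    proof
      fix p assume "p \<in> {p. fst p @ snd p = w}"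
      then have "p = ?h (length (fst p))" "length (fst p) \<in> {0..length w}" by auto
      then show "p \<in> ?h ` {0..length w}" by blast
    qed
  qed
  have "(\<Sum>i\<in>{0..length w}. a (take i w) * b (drop i w)) =
        (\<Sum>p\<in>?h ` {0..length w}. a (fst p) * b (snd p))"
    using sum.reindex[OF inj, of "\<lambda>p. a (fst p) * b (snd p)"] by simp
  also have "\<dots> = (\<Sum>p\<in>{p. fst p @ snd p = w}. a (fst p) * b (snd p))" using img by simp
  also have "\<dots> = (\<Sum>p\<in>{p\<in>Fa \<times> Fb. fst p @ snd p = w}. a (fst p) * b (snd p))"
  proof (rule sum.mono_neutral_right)
    show "finite {p. fst p @ snd p = w}" unfolding img[symmetric] by simp
    show "{p\<in>Fa \<times> Fb. fst p @ snd p = w} \<subseteq> {p. fst p @ snd p = w}" by auto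
    show "\<forall>i\<in>{p. fst p @ snd p = w} - {p\<in>Fa \<times> Fb. fst p @ snd p = w}. a (fst i) * b (snd i) = 0"
    proof
      fix p assume "p \<in> {p. fst p @ snd p = w} - {p\<in>Fa \<times> Fb. fst p @ snd p = w}"
      then have "fst p \<notin> Fa \<or> snd p \<notin> Fb" by (cases p) auto
      then have "a (fst p) = 0 \<or> b (snd p) = 0" using assms(3,4) unfolding supp_def by blast
      then show "a (fst p) * b (snd p) = 0" by auto
    qed
  qed
  finally show ?thesis .
qed

locale rep_sys =
  fixes r :: "'e \<Rightarrow> 'v" and D :: "'v \<Rightarrow> real set" and R :: "'e \<Rightarrow> real set"
    and f :: "'e \<Rightarrow> real \<Rightarrow> real"
begin

definition op :: "('v,'e) clgen \<Rightarrow> (real \<Rightarrow> 'k::field) \<Rightarrow> real \<Rightarrow> 'k" where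
  "op a \<psi> = (case a of
      GV v \<Rightarrow> (\<lambda>x. if x \<in> D v then \<psi> x else 0)
    | GE e \<Rightarrow> (\<lambda>x. if x \<in> R e then \<psi> (the_inv_into (D (r e)) (f e) x) else 0)
    | GS e \<Rightarrow> (\<lambda>x. if x \<in> D (r e) then \<psi> (f e x) else 0))"

lemma op_simps[simp]:
  "op (GV v) \<psi> = (\<lambda>x. if x \<in> D v then \<psi> x else 0)"
  "op (GE e) \<psi> = (\<lambda>x. if x \<in> R e then \<psi> (the_inv_into (D (r e)) (f e) x) else 0)"
  "op (GS e) \<psi> = (\<lambda>x. if x \<in> D (r e) then \<psi> (f e x) else 0)"
  by (simp_all add: op_def)

definition act :: "('v,'e) clgen list \<Rightarrow> (real \<Rightarrow> 'k::field) \<Rightarrow> real \<Rightarrow> 'k" where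
  "act w \<phi> = foldr op w \<phi>"

definition Rep :: "(('v,'e) clgen list \<Rightarrow> 'k::field) \<Rightarrow> (real \<Rightarrow> 'k) \<Rightarrow> real \<Rightarrow> 'k" where
  "Rep p \<phi> = (\<lambda>x. \<Sum>w\<in>supp p. p w * act w \<phi> x)"

lemma act_Nil[simp]: "act [] \<phi> = \<phi>" by (simp add: act_def)
lemma act_Cons[simp]: "act (a # w) \<phi> = op a (act w \<phi>)" by (simp add: act_def)
lemma act_append: "act (u @ v) \<phi> = act u (act v \<phi>)" by (simp add: act_def)

lemma op_lin: "op a (\<lambda>x. \<Sum>i\<in>I. c i * \<psi> i x) = (\<lambda>x. \<Sum>i\<in>I. c i * op a (\<psi> i) x)"
  by (cases a) (auto simp: op_def)

lemma act_lin: "act u (\<lambda>x. \<Sum>i\<in>I. c i * \<psi> i x) = (\<lambda>x. \<Sum>i\<in>I. c i * act u (\<psi> i) x)"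
  by (induction u) (simp_all add: op_lin)

lemma op_add: "op a (\<lambda>x. \<phi> x + \<psi> x) = (\<lambda>x. op a \<phi> x + op a \<psi> x)"
  by (cases a) (auto simp: op_def)
lemma op_smult: "op a (\<lambda>x. c * \<phi> x) = (\<lambda>x. c * op a \<phi> x)"
  by (cases a) (auto simp: op_def)
lemma act_add: "act u (\<lambda>x. \<phi> x + \<psi> x) = (\<lambda>x. act u \<phi> x + act u \<psi> x)"
  by (induction u) (simp_all add: op_add)
lemma act_smult: "act u (\<lambda>x. c * \<phi> x) = (\<lambda>x. c * act u \<phi> x)"
  by (induction u) (simp_all add: op_smult)

lemma Rep_add_fun: "Rep p (\<lambda>x. \<phi> x + \<psi> x) = (\<lambda>x. Rep p \<phi> x + Rep p \<psi> x)"
  by (simp add: Rep_def act_add distrib_left sum.distrib)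
lemma Rep_smult_fun: "Rep p (\<lambda>x. c * \<phi> x) = (\<lambda>x. c * Rep p \<phi> x)"
  by (simp add: Rep_def act_smult sum_distrib_left algebra_simps)

lemma Rep_superset: "finite F \<Longrightarrow> supp p \<subseteq> F \<Longrightarrow> Rep p \<phi> = (\<lambda>x. \<Sum>w\<in>F. p w * act w \<phi> x)"
  unfolding Rep_def by (rule ext, rule sum.mono_neutral_left) (auto simp: supp_def)

lemma Rep_add: "fin a \<Longrightarrow> fin b \<Longrightarrow> Rep (fa_add a b) \<phi> = (\<lambda>x. Rep a \<phi> x + Rep b \<phi> x)"
proof -
  assume a: "fin a" and b: "fin b"
  let ?F = "supp a \<union> supp b"
  have "Rep (fa_add a b) \<phi> = (\<lambda>x. \<Sum>w\<in>?F. fa_add a b w * act w \<phi> x)"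
    by (rule Rep_superset) (use a b in \<open>auto simp: supp_def fa_add_def\<close>)
  moreover have "Rep a \<phi> = (\<lambda>x. \<Sum>w\<in>?F. a w * act w \<phi> x)"
    by (rule Rep_superset) (use a b in auto)
  moreover have "Rep b \<phi> = (\<lambda>x. \<Sum>w\<in>?F. b w * act w \<phi> x)"
    by (rule Rep_superset) (use a b in auto)
  ultimately show ?thesis by (simp add: fa_add_def distrib_right sum.distrib)
qed

lemma Rep_diff: "fin a \<Longrightarrow> fin b \<Longrightarrow> Rep (fa_diff a b) \<phi> = (\<lambda>x. Rep a \<phi> x - Rep b \<phi> x)"
proof -
  assume a: "fin a" and b: "fin b"
  let ?F = "supp a \<union> supp b"
  have "Rep (fa_diff a b) \<phi> = (\<lambda>x. \<Sum>w\<in>?F. fa_diff a b w * act w \<phi> x)"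
    by (rule Rep_superset) (use a b in \<open>auto simp: supp_def fa_diff_def\<close>)
  moreover have "Rep a \<phi> = (\<lambda>x. \<Sum>w\<in>?F. a w * act w \<phi> x)"
    by (rule Rep_superset) (use a b in auto)
  moreover have "Rep b \<phi> = (\<lambda>x. \<Sum>w\<in>?F. b w * act w \<phi> x)"
    by (rule Rep_superset) (use a b in auto)
  ultimately show ?thesis by (simp add: fa_diff_def left_diff_distrib sum_subtractf)
qed

lemma Rep_smult: "fin a \<Longrightarrow> Rep (fa_smult c a) \<phi> = (\<lambda>x. c * Rep a \<phi> x)"
proof -
  assume a: "fin a"
  have "Rep (fa_smult c a) \<phi> = (\<lambda>x. \<Sum>w\<in>supp a. fa_smult c a w * act w \<phi> x)"
    by (rule Rep_superset) (use a in \<open>auto simp: supp_def fa_smult_def\<close>)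
  then show ?thesis by (simp add: Rep_def fa_smult_def sum_distrib_left mult.assoc)
qed

lemma Rep_mon: "Rep (mon u) \<phi> = act u \<phi>"
  by (simp add: Rep_def supp_mon) (simp add: mon_def)

lemma Rep_zero: "Rep (\<lambda>_. 0) \<phi> = (\<lambda>x. 0)"
  by (simp add: Rep_def supp_def)

lemma Rep_sum: "finite I \<Longrightarrow> (\<forall>i\<in>I. fin (p i)) \<Longrightarrow>
   Rep (\<lambda>w. \<Sum>i\<in>I. p i w) \<phi> = (\<lambda>x. \<Sum>i\<in>I. Rep (p i) \<phi> x)"
proof (induction I rule: finite_induct)
  case empty then show ?case by (simp add: Rep_zero)
next
  case (insert i I)
  have fI: "fin (\<lambda>w. \<Sum>i\<in>I. p i w)"
    by (rule finite_subset[of _ "\<Union>i\<in>I. supp (p i)"])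
       (use insert in \<open>auto simp: supp_def intro: sum.neutral\<close>)
  have "(\<lambda>w. \<Sum>i\<in>insert i I. p i w) = fa_add (p i) (\<lambda>w. \<Sum>i\<in>I. p i w)"
    using insert by (simp add: fa_add_def)
  then show ?case using insert fI by (simp add: Rep_add)
qed

lemma Rep_mult: "fin a \<Longrightarrow> fin b \<Longrightarrow> Rep (fa_mult a b) \<phi> = Rep a (Rep b \<phi>)"
proof -
  assume a: "fin a" and b: "fin b"
  let ?Fa = "supp a" and ?Fb = "supp b"
  let ?cat = "\<lambda>p. fst p @ snd p"
  let ?F = "?cat ` (?Fa \<times> ?Fb)"
  have cat_eq: "?cat = (\<lambda>(u,v). u @ v)" by auto
  have "Rep (fa_mult a b) \<phi> = (\<lambda>x. \<Sum>w\<in>?F. fa_mult a b w * act w \<phi> x)"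
    using Rep_superset[OF finite_imageI[OF finite_cartesian_product[OF a b]] supp_mult] .
  also have "\<dots> = (\<lambda>x. \<Sum>w\<in>?F. \<Sum>p\<in>{p\<in>?Fa \<times> ?Fb. ?cat p = w}. a (fst p) * b (snd p) * act (?cat p) \<phi> x)"
  proof (rule ext, rule sum.cong[OF refl])
    fix x w
    have "fa_mult a b w = (\<Sum>p\<in>{p\<in>?Fa \<times> ?Fb. ?cat p = w}. a (fst p) * b (snd p))"
      unfolding fa_mult_def by (rule split_sum) (use a b in auto)
    then show "fa_mult a b w * act w \<phi> x = (\<Sum>p\<in>{p\<in>?Fa \<times> ?Fb. ?cat p = w}. a (fst p) * b (snd p) * act (?cat p) \<phi> x)"
      by (simp add: sum_distrib_right)
  qed
  also have "\<dots> = (\<lambda>x. \<Sum>p\<in>?Fa \<times> ?Fb. a (fst p) * b (snd p) * act (?cat p) \<phi> x)"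
    by (rule ext, rule sum.image_gen[symmetric]) (use a b in auto)
  also have "\<dots> = (\<lambda>x. \<Sum>u\<in>?Fa. \<Sum>v\<in>?Fb. a u * (b v * act u (act v \<phi>) x))"
    by (simp add: sum.cartesian_product act_append mult.assoc split_def)
  also have "\<dots> = Rep a (Rep b \<phi>)"
    by (simp add: Rep_def act_lin sum_distrib_left)
  finally show ?thesis .
qed

end



lemma sum_ind_disj:
  assumes "finite X" "\<And>d e. d \<in> X \<Longrightarrow> e \<in> X \<Longrightarrow> d \<noteq> e \<Longrightarrow> R d \<inter> R e = {}"
  shows "(\<Sum>e\<in>X. if x \<in> R e then c else 0) = (if x \<in> (\<Union>e\<in>X. R e) then c else (0::'k::field))"
proof (cases "x \<in> (\<Union>e\<in>X. R e)")
  case True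
  then obtain e0 where e0: "e0 \<in> X" "x \<in> R e0" by auto
  have "(\<Sum>e\<in>X. if x \<in> R e then c else 0) = (\<Sum>e\<in>X. if e = e0 then c else 0)"
    by (rule sum.cong) (use assms(2) e0 in auto)
  also have "\<dots> = c" using e0 assms(1) by simp
  finally show ?thesis using True by simp
next
  case False then show ?thesis by auto
qed

locale bs = rep_sys r D R f
  for E0 :: "'v set" and E1 :: "'e set" and r s :: "'e \<Rightarrow> 'v"
    and C :: "'v \<Rightarrow> 'e set set" and S :: "'e set set"
    and D :: "'v \<Rightarrow> real set" and R :: "'e \<Rightarrow> real set" and f :: "'e \<Rightarrow> real \<Rightarrow> real" +
  assumes sep: "separated_graph E0 E1 r s C"
    and SC: "S \<subseteq> sg_Cfin E0 C"
    and br: "branching_system E0 E1 r s C S UNIV R D f"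
begin

lemma inC: "Y \<in> C v \<Longrightarrow> e \<in> Y \<Longrightarrow> s e = v \<and> e \<in> E1 \<and> v \<in> E0"
proof -
  assume Y: "Y \<in> C v" and e: "e \<in> Y"
  have ns: "nonsink E0 E1 s v" using sep Y unfolding separated_graph_def by auto
  then have "\<Union>(C v) = {e \<in> E1. s e = v}" using sep unfolding separated_graph_def by auto
  then show ?thesis using Y e ns by (auto simp: nonsink_def)
qed

lemma sgC: "Y \<in> sg_C E0 C \<Longrightarrow> e \<in> Y \<Longrightarrow> e \<in> E1"
  using inC by (auto simp: sg_C_def)

lemma brs:
  "\<forall>Y\<in>sg_C E0 C. \<forall>d\<in>Y. \<forall>e\<in>Y. d \<noteq> e \<longrightarrow> R d \<inter> R e = {}"
  "\<forall>v\<in>E0. \<forall>w\<in>E0. v \<noteq> w \<longrightarrow> D v \<inter> D w = {}"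
  "\<forall>e\<in>E1. R e \<subseteq> D (s e)"
  "\<forall>v\<in>E0. \<forall>Y\<in>S. Y \<in> C v \<longrightarrow> D v = (\<Union>e\<in>Y. R e)"
  "\<forall>e\<in>E1. bij_betw (f e) (D (r e)) (R e)"
  using br unfolding branching_system_def by simp_all

lemma Ddisj: "v \<in> E0 \<Longrightarrow> w \<in> E0 \<Longrightarrow> v \<noteq> w \<Longrightarrow> x \<in> D v \<Longrightarrow> x \<in> D w \<Longrightarrow> False"
  using brs(2) by blast
lemma Rdisj: "Y \<in> sg_C E0 C \<Longrightarrow> d \<in> Y \<Longrightarrow> e \<in> Y \<Longrightarrow> d \<noteq> e \<Longrightarrow> R d \<inter> R e = {}"
  using brs(1) by blast
lemma Rsub: "e \<in> E1 \<Longrightarrow> R e \<subseteq> D (s e)"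
  using brs(3) by blast
lemma Dcov: "v \<in> E0 \<Longrightarrow> Y \<in> S \<Longrightarrow> Y \<in> C v \<Longrightarrow> D v = (\<Union>e\<in>Y. R e)"
  using brs(4) by blast
lemma fbij: "e \<in> E1 \<Longrightarrow> bij_betw (f e) (D (r e)) (R e)"
  using brs(5) by blast

lemma bij_facts: "e \<in> E1 \<Longrightarrow> inj_on (f e) (D (r e)) \<and> f e ` D (r e) = R e"
  using fbij[of e] by (simp add: bij_betw_def)
lemma inv_in: "e \<in> E1 \<Longrightarrow> x \<in> R e \<Longrightarrow> the_inv_into (D (r e)) (f e) x \<in> D (r e)"
  using bij_facts[of e] the_inv_into_into[of "f e" "D (r e)" x "D (r e)"] by simp
lemma f_inv: "e \<in> E1 \<Longrightarrow> x \<in> R e \<Longrightarrow> f e (the_inv_into (D (r e)) (f e) x) = x"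
  using bij_facts[of e] f_the_inv_into_f[of "f e" "D (r e)" x] by simp
lemma inv_f: "e \<in> E1 \<Longrightarrow> x \<in> D (r e) \<Longrightarrow> the_inv_into (D (r e)) (f e) (f e x) = x"
  using bij_facts[of e] the_inv_into_f_f[of "f e" "D (r e)" x] by simp
lemma f_in: "e \<in> E1 \<Longrightarrow> x \<in> D (r e) \<Longrightarrow> f e x \<in> R e"
  using bij_facts[of e] by blast

lemma diff0:
  assumes "fin p" "fin q" "\<And>\<phi>. Rep p \<phi> = Rep q \<phi>"
  shows "fin (fa_diff p q) \<and> (\<forall>\<phi>. Rep (fa_diff p q) \<phi> = (\<lambda>x. 0))"
  using assms by (simp add: fin_diff Rep_diff)

lemma rel0:
  assumes "a \<in> CL_rels E0 E1 r s C S"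
  shows "fin a \<and> (\<forall>\<phi>. Rep a \<phi> = (\<lambda>x. 0::'k::field))"
  using assms unfolding CL_rels_def
proof (elim UnE CollectE exE conjE)
  fix v w assume a: "a = fa_diff (mon [GV v, GV w]) (if v = w then mon [GV v] else (\<lambda>_. 0))"
    and v: "v \<in> E0" and w: "w \<in> E0"
  show ?thesis unfolding a
  proof (rule diff0)
    show "fin (mon [GV v, GV w] :: _ \<Rightarrow> 'k)" by (rule fin_mon)
    show "fin (if v = w then mon [GV v] else (\<lambda>_. 0::'k))" by (simp add: fin_mon fin_zero)
    fix \<phi> :: "real \<Rightarrow> 'k"
    show "Rep (mon [GV v, GV w]) \<phi> = Rep (if v = w then mon [GV v] else (\<lambda>_. 0)) \<phi>"
    proof (cases "v = w")
      case True then show ?thesis by (auto simp: Rep_mon intro!: ext)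
    next
      case False
      have "Rep (mon [GV v, GV w]) \<phi> = (\<lambda>x. 0)"
      proof
        fix x show "Rep (mon [GV v, GV w]) \<phi> x = 0"
          using Ddisj[OF v w False, of x] by (auto simp: Rep_mon)
      qed
      then show ?thesis using False by (simp add: Rep_zero)
    qed
  qed
next
  fix e assume a: "a = fa_diff (mon [GV (s e), GE e]) (mon [GE e])" and e: "e \<in> E1"
  show ?thesis unfolding a
    by (rule diff0) (use Rsub[OF e] in \<open>auto simp: fin_mon Rep_mon intro!: ext\<close>)
next
  fix e assume a: "a = fa_diff (mon [GE e, GV (r e)]) (mon [GE e])" and e: "e \<in> E1"
  show ?thesis unfolding a
    by (rule diff0) (use inv_in[OF e] in \<open>auto simp: fin_mon Rep_mon intro!: ext\<close>)
next
  fix e assume a: "a = fa_diff (mon [GV (r e), GS e]) (mon [GS e])" and e: "e \<in> E1"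
  show ?thesis unfolding a
    by (rule diff0) (auto simp: fin_mon Rep_mon intro!: ext)
next
  fix e assume a: "a = fa_diff (mon [GS e, GV (s e)]) (mon [GS e])" and e: "e \<in> E1"
  show ?thesis unfolding a
  proof (rule diff0)
    have h: "\<And>x. x \<in> D (r e) \<Longrightarrow> f e x \<in> D (s e)" using f_in[OF e] Rsub[OF e] by blast
    show "\<And>\<phi>. Rep (mon [GS e, GV (s e)]) \<phi> = Rep (mon [GS e]) (\<phi> :: real \<Rightarrow> 'k)"
      using h by (auto simp: Rep_mon intro!: ext)
  qed (simp_all add: fin_mon)
next
  fix e g Y assume a: "a = fa_diff (mon [GS e, GE g]) (if e = g then mon [GV (r e)] else (\<lambda>_. 0))"
    and Y: "Y \<in> sg_C E0 C" and e: "e \<in> Y" and g: "g \<in> Y"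
  have e1: "e \<in> E1" and g1: "g \<in> E1" using sgC Y e g by auto
  show ?thesis unfolding a
  proof (rule diff0)
    show "fin (mon [GS e, GE g] :: _ \<Rightarrow> 'k)" by (rule fin_mon)
    show "fin (if e = g then mon [GV (r e)] else (\<lambda>_. 0::'k))" by (simp add: fin_mon fin_zero)
    fix \<phi> :: "real \<Rightarrow> 'k"
    show "Rep (mon [GS e, GE g]) \<phi> = Rep (if e = g then mon [GV (r e)] else (\<lambda>_. 0)) \<phi>"
    proof (cases "e = g")
      case True
      then show ?thesis using f_in[OF e1] inv_f[OF e1] by (auto simp: Rep_mon intro!: ext)
    next
      case False
      have h: "\<And>x. x \<in> D (r e) \<Longrightarrow> f e x \<notin> R g" using f_in[OF e1] Rdisj[OF Y e g False] by blast
      show ?thesis using h False by (auto simp: Rep_mon Rep_zero intro!: ext)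
    qed
  qed
next
  fix v X assume a: "a = fa_diff (mon [GV v]) (\<lambda>w. \<Sum>e\<in>X. mon [GE e, GS e] w)"
    and ns: "nonsink E0 E1 s v" and XS: "X \<in> S" and X: "X \<in> C v"
  have finX: "finite X" using SC XS by (auto simp: sg_Cfin_def)
  have v: "v \<in> E0" using ns by (simp add: nonsink_def)
  have XE: "e \<in> E1" if "e \<in> X" for e using inC X that by blast
  have XsgC: "X \<in> sg_C E0 C" using v X by (auto simp: sg_C_def)
  show ?thesis unfolding a
  proof (rule diff0)
    show "fin (mon [GV v] :: _ \<Rightarrow> 'k)" by (rule fin_mon)
    show "fin (\<lambda>w. \<Sum>e\<in>X. (mon [GE e, GS e] w :: 'k))"
    proof (rule finite_subset[of _ "(\<lambda>e. [GE e, GS e]) ` X"])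
      show "supp (\<lambda>w. \<Sum>e\<in>X. (mon [GE e, GS e] w :: 'k)) \<subseteq> (\<lambda>e. [GE e, GS e]) ` X"
      proof
        fix w assume "w \<in> supp (\<lambda>w. \<Sum>e\<in>X. (mon [GE e, GS e] w :: 'k))"
        then have "(\<Sum>e\<in>X. (mon [GE e, GS e] w :: 'k)) \<noteq> 0" by (simp add: supp_def)
        then obtain e where "e \<in> X" "(mon [GE e, GS e] w :: 'k) \<noteq> 0" by (meson sum.neutral)
        then show "w \<in> (\<lambda>e. [GE e, GS e]) ` X" by (auto simp: mon_def split: if_splits)
      qed
    qed (use finX in simp)
    fix \<phi> :: "real \<Rightarrow> 'k"
    have "Rep (\<lambda>w. \<Sum>e\<in>X. (mon [GE e, GS e] w :: 'k)) \<phi> = (\<lambda>x. \<Sum>e\<in>X. Rep (mon [GE e, GS e]) \<phi> x)"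
      by (rule Rep_sum) (use finX fin_mon in auto)
    also have "\<dots> = (\<lambda>x. \<Sum>e\<in>X. if x \<in> R e then \<phi> x else 0)"
      by (rule ext, rule sum.cong) (use inv_in XE f_inv in \<open>auto simp: Rep_mon\<close>)
    also have "\<dots> = (\<lambda>x. if x \<in> (\<Union>e\<in>X. R e) then \<phi> x else 0)"
      by (rule ext, rule sum_ind_disj) (use finX Rdisj[OF XsgC] in auto)
    also have "\<dots> = Rep (mon [GV v]) \<phi>"
      using Dcov[OF v XS X] by (auto simp: Rep_mon)
    finally show "Rep (mon [GV v]) \<phi> = Rep (\<lambda>w. \<Sum>e\<in>X. (mon [GE e, GS e] w :: 'k)) \<phi>" by simp
  qed
qed

lemma op_zero: "op a (\<lambda>x. 0) = (\<lambda>x. 0)" by (cases a) simp_all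
lemma act_zero: "act u (\<lambda>x. 0) = (\<lambda>x. 0)" by (induction u) (simp_all add: op_zero)
lemma Rep_zero_fun: "Rep p (\<lambda>x. 0) = (\<lambda>x. 0)" by (simp add: Rep_def act_zero)

lemma ideal0:
  "a \<in> CL_ideal E0 E1 r s C S \<Longrightarrow> fin a \<and> (\<forall>\<phi>. Rep a \<phi> = (\<lambda>x. 0::'k::field))"
proof (induction rule: CL_ideal.induct)
  case (rel a) then show ?case by (rule rel0)
next
  case zero then show ?case by (simp add: fin_zero Rep_zero)
next
  case (add a b) then show ?case by (simp add: fin_add Rep_add)
next
  case (smult a c) then show ?case by (simp add: fin_smult Rep_smult)
next
  case (lmult a x) then show ?case
    using free_alg_fin[OF lmult(2)] by (simp add: fin_mult Rep_mult Rep_zero_fun)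
next
  case (rmult a x) then show ?case
    using free_alg_fin[OF rmult(2)] by (simp add: fin_mult Rep_mult)
qed

definition pi :: "(('v, 'e) clgen list \<Rightarrow> 'k::field) set \<Rightarrow> (real \<Rightarrow> 'k) \<Rightarrow> real \<Rightarrow> 'k" where
  "pi A = Rep (SOME b. b \<in> A)"

lemma pi_cls:
  fixes a :: "('v, 'e) clgen list \<Rightarrow> 'k::field"
  assumes a: "a \<in> free_alg E0 E1"
  shows "pi (CL_class E0 E1 r s C S a) = Rep a"
proof -
  have z: "fa_diff a a = (\<lambda>_. 0)" by (simp add: fa_diff_def)
  have "(a, a) \<in> CL_cong E0 E1 r s C S"
    unfolding CL_cong_def using a CL_ideal.zero[of E0 E1 r s C S] z by simp
  then have "a \<in> CL_class E0 E1 r s C S a" unfolding CL_class_def by simp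
  then have sb: "(SOME b. b \<in> CL_class E0 E1 r s C S a) \<in> CL_class E0 E1 r s C S a"
    by (rule someI[where P="\<lambda>b. b \<in> CL_class E0 E1 r s C S a"])
  define b where "b = (SOME b. b \<in> CL_class E0 E1 r s C S a)"
  from sb have "(a, b) \<in> CL_cong E0 E1 r s C S" unfolding CL_class_def b_def by simp
  then have b: "b \<in> free_alg E0 E1" "fa_diff a b \<in> CL_ideal E0 E1 r s C S"
    unfolding CL_cong_def by simp_all
  have eq: "Rep a \<phi> = Rep b \<phi>" for \<phi> :: "real \<Rightarrow> 'k"
  proof -
    have "Rep (fa_diff a b) \<phi> = (\<lambda>x. 0)" using ideal0[OF b(2)] by blast
    then have "(\<lambda>x. Rep a \<phi> x - Rep b \<phi> x) = (\<lambda>x. 0)"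
      using Rep_diff[OF free_alg_fin[OF a] free_alg_fin[OF b(1)], of \<phi>] by simp
    then show ?thesis by (simp add: fun_eq_iff)
  qed
  show ?thesis unfolding pi_def b_def[symmetric] using eq by (intro ext) simp
qed

lemma pi_hom: "CL_hom E0 E1 r s C S UNIV (pi :: (('v, 'e) clgen list \<Rightarrow> 'k::field) set \<Rightarrow> _)"
proof -
  have M: "fun_module UNIV = UNIV" by (simp add: fun_module_def)
  let ?cls = "CL_class E0 E1 r s C S :: (('v, 'e) clgen list \<Rightarrow> 'k) \<Rightarrow> _"
  have h1: "\<forall>A\<in>CL_algebra E0 E1 r s C S. is_endo UNIV (pi A :: (real \<Rightarrow> 'k) \<Rightarrow> _)"
  proof
    fix A :: "(('v, 'e) clgen list \<Rightarrow> 'k) set" assume "A \<in> CL_algebra E0 E1 r s C S"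
    then obtain a where a: "a \<in> free_alg E0 E1" "A = ?cls a"
      unfolding CL_algebra_def CL_class_def by (elim quotientE) blast
    show "is_endo UNIV (pi A)"
      unfolding a(2) pi_cls[OF a(1)] is_endo_def by (simp add: Rep_add_fun Rep_smult_fun)
  qed
  have h2: "\<forall>a\<in>free_alg E0 E1. \<forall>b\<in>free_alg E0 E1. \<forall>\<phi>.
          pi (?cls (fa_add a b)) \<phi> = (\<lambda>x. pi (?cls a) \<phi> x + pi (?cls b) \<phi> x)"
  proof (intro ballI allI)
    fix a b :: "('v, 'e) clgen list \<Rightarrow> 'k" and \<phi> :: "real \<Rightarrow> 'k"
    assume a: "a \<in> free_alg E0 E1" and b: "b \<in> free_alg E0 E1"
    show "pi (?cls (fa_add a b)) \<phi> = (\<lambda>x. pi (?cls a) \<phi> x + pi (?cls b) \<phi> x)"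
      unfolding pi_cls[OF free_alg_add[OF a b]] pi_cls[OF a] pi_cls[OF b]
      by (rule Rep_add[OF free_alg_fin[OF a] free_alg_fin[OF b]])
  qed
  have h3: "\<forall>c. \<forall>a\<in>free_alg E0 E1. \<forall>\<phi>. pi (?cls (fa_smult c a)) \<phi> = (\<lambda>x. c * pi (?cls a) \<phi> x)"
  proof (intro ballI allI)
    fix c :: 'k and a :: "('v, 'e) clgen list \<Rightarrow> 'k" and \<phi> :: "real \<Rightarrow> 'k"
    assume a: "a \<in> free_alg E0 E1"
    show "pi (?cls (fa_smult c a)) \<phi> = (\<lambda>x. c * pi (?cls a) \<phi> x)"
      unfolding pi_cls[OF free_alg_smult[OF a]] pi_cls[OF a]
      by (rule Rep_smult[OF free_alg_fin[OF a]])
  qed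
  have h4: "\<forall>a\<in>free_alg E0 E1. \<forall>b\<in>free_alg E0 E1. \<forall>\<phi>.
          pi (?cls (fa_mult a b)) \<phi> = pi (?cls a) (pi (?cls b) \<phi>)"
  proof (intro ballI allI)
    fix a b :: "('v, 'e) clgen list \<Rightarrow> 'k" and \<phi> :: "real \<Rightarrow> 'k"
    assume a: "a \<in> free_alg E0 E1" and b: "b \<in> free_alg E0 E1"
    show "pi (?cls (fa_mult a b)) \<phi> = pi (?cls a) (pi (?cls b) \<phi>)"
      unfolding pi_cls[OF free_alg_mult[OF a b]] pi_cls[OF a] pi_cls[OF b]
      by (rule Rep_mult[OF free_alg_fin[OF a] free_alg_fin[OF b]])
  qed
  show ?thesis
    unfolding CL_hom_def Let_def M using h1 h2 h3 h4 by simp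
qed

lemma pi_vals: "\<forall>\<phi>\<in>fun_module UNIV.
        (\<forall>v\<in>E0. (pi :: (('v, 'e) clgen list \<Rightarrow> 'k::field) set \<Rightarrow> _) (CL_class E0 E1 r s C S (mon [GV v])) \<phi> =
                   (\<lambda>x. if x \<in> D v then \<phi> x else 0)) \<and>
        (\<forall>e\<in>E1. (pi :: (('v, 'e) clgen list \<Rightarrow> 'k::field) set \<Rightarrow> _) (CL_class E0 E1 r s C S (mon [GE e])) \<phi> =
                   (\<lambda>x. if x \<in> R e then \<phi> (the_inv_into (D (r e)) (f e) x) else 0)) \<and>
        (\<forall>e\<in>E1. (pi :: (('v, 'e) clgen list \<Rightarrow> 'k::field) set \<Rightarrow> _) (CL_class E0 E1 r s C S (mon [GS e])) \<phi> =
                   (\<lambda>x. if x \<in> D (r e) then \<phi> (f e x) else 0))"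
proof -
  let ?cls = "CL_class E0 E1 r s C S :: (('v, 'e) clgen list \<Rightarrow> 'k) \<Rightarrow> _"
  have monfa: "(mon [g] :: ('v, 'e) clgen list \<Rightarrow> 'k) \<in> free_alg E0 E1" if "g \<in> gens E0 E1" for g
    using that by (auto simp: free_alg_def mon_def)
  show ?thesis
  proof (intro ballI conjI)
    fix \<phi> :: "real \<Rightarrow> 'k" and v assume "v \<in> E0"
    then have "GV v \<in> gens E0 E1" by (simp add: gens_def)
    then show "pi (?cls (mon [GV v])) \<phi> = (\<lambda>x. if x \<in> D v then \<phi> x else 0)"
      by (simp add: pi_cls[OF monfa] Rep_mon)
  next
    fix \<phi> :: "real \<Rightarrow> 'k" and e assume "e \<in> E1"
    then have "GE e \<in> gens E0 E1" by (simp add: gens_def)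
    then show "pi (?cls (mon [GE e])) \<phi> = (\<lambda>x. if x \<in> R e then \<phi> (the_inv_into (D (r e)) (f e) x) else 0)"
      by (simp add: pi_cls[OF monfa] Rep_mon)
  next
    fix \<phi> :: "real \<Rightarrow> 'k" and e assume "e \<in> E1"
    then have "GS e \<in> gens E0 E1" by (simp add: gens_def)
    then show "pi (?cls (mon [GS e])) \<phi> = (\<lambda>x. if x \<in> D (r e) then \<phi> (f e x) else 0)"
      by (simp add: pi_cls[OF monfa] Rep_mon)
  qed
qed

lemma rep_main:
  "\<exists>(\<pi> :: (('v, 'e) clgen list \<Rightarrow> 'k::field) set \<Rightarrow> (real \<Rightarrow> 'k) \<Rightarrow> (real \<Rightarrow> 'k)).
     CL_hom E0 E1 r s C S UNIV \<pi> \<and>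
     (\<forall>\<phi>\<in>fun_module UNIV.
        (\<forall>v\<in>E0. \<pi> (CL_class E0 E1 r s C S (mon [GV v])) \<phi> =
                   (\<lambda>x. if x \<in> D v then \<phi> x else 0)) \<and>
        (\<forall>e\<in>E1. \<pi> (CL_class E0 E1 r s C S (mon [GE e])) \<phi> =
                   (\<lambda>x. if x \<in> R e then \<phi> (the_inv_into (D (r e)) (f e) x) else 0)) \<and>
        (\<forall>e\<in>E1. \<pi> (CL_class E0 E1 r s C S (mon [GS e])) \<phi> =
                   (\<lambda>x. if x \<in> D (r e) then \<phi> (f e x) else 0)))"
  by (intro exI[of _ pi] conjI pi_hom pi_vals)

end



definition getl :: "nat list \<Rightarrow> nat \<Rightarrow> nat" where
  "getl t k = (if k < length t then t ! k else 0)"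

definition mk :: "nat \<Rightarrow> nat \<Rightarrow> nat \<Rightarrow> nat \<Rightarrow> nat \<Rightarrow> nat list" where
  "mk k1 a1 k2 a2 n = map (\<lambda>i. if i = k1 then a1 else if i = k2 then a2 else 0) [0..<max k1 k2 + 1 + n]"

lemma getl_mk1: "getl (mk k1 a1 k2 a2 n) k1 = a1"
  unfolding getl_def mk_def by (simp del: upt_Suc add: nth_map)
lemma getl_mk2: "k1 \<noteq> k2 \<Longrightarrow> getl (mk k1 a1 k2 a2 n) k2 = a2"
  unfolding getl_def mk_def by (simp del: upt_Suc add: nth_map)
lemma length_mk: "length (mk k1 a1 k2 a2 n) = max k1 k2 + 1 + n"
  unfolding mk_def by (simp del: upt_Suc)
lemma getl_Nil: "getl [] k = 0" by (simp add: getl_def)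

definition props :: "'v set \<Rightarrow> 'e set \<Rightarrow> ('e \<Rightarrow> 'v) \<Rightarrow> ('v \<Rightarrow> 'e set set) \<Rightarrow> 'e set set
   \<Rightarrow> ('e \<Rightarrow> 'x set) \<Rightarrow> ('v \<Rightarrow> 'x set) \<Rightarrow> bool" where
  "props E0 E1 s C S R D \<longleftrightarrow> (\<forall>v. nonsink E0 E1 s v \<longrightarrow>
        (\<forall>Y1\<in>C v. \<forall>Y2\<in>C v. Y1 \<noteq> Y2 \<longrightarrow> (\<forall>e\<in>Y1. \<forall>e'\<in>Y2. R e \<inter> R e' \<noteq> {})) \<and>
        (\<forall>Y\<in>C v - S. (\<Union>e\<in>Y. R e) \<subset> D v) \<and>
        (\<forall>Y1\<in>C v - S. \<forall>Y2\<in>C v - S. Y1 \<noteq> Y2 \<longrightarrow> (\<Union>e\<in>Y1. R e) \<noteq> (\<Union>e\<in>Y2. R e)))"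

lemma bij_inv_img:
  assumes g: "inj g" shows "bij_betw (inv g) (g ` A) A"
proof -
  have "bij_betw g A (g ` A)" using inj_on_subset[OF g subset_UNIV] by (simp add: bij_betw_def)
  then have 1: "bij_betw (inv_into A g) (g ` A) A" by (rule bij_betw_inv_into)
  have "inv_into A g y = inv g y" if "y \<in> g ` A" for y
  proof -
    obtain x where x: "x \<in> A" "y = g x" using \<open>y \<in> g ` A\<close> by blast
    have "inv_into A g (g x) = x" by (rule inv_into_f_f[OF inj_on_subset[OF g subset_UNIV] x(1)])
    moreover have "inv g (g x) = x" using g by simp
    ultimately show ?thesis using x(2) by simp
  qed
  then show ?thesis using 1 bij_betw_cong by blast
qed

lemma img_Int: "inj g \<Longrightarrow> g ` A \<inter> g ` B = g ` (A \<inter> B)"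
  by (simp add: image_Int)
lemma img_psub:
  assumes g: "inj g" and AB: "A \<subset> B" shows "g ` A \<subset> g ` B"
proof -
  have "g ` A \<subseteq> g ` B" using AB by (simp add: image_mono)
  moreover have "g ` A \<noteq> g ` B" using AB inj_image_eq_iff[OF g] by auto
  ultimately show ?thesis by blast
qed

lemma transport:
  fixes g :: "'x \<Rightarrow> real"
  assumes g: "inj g" and br: "branching_system E0 E1 r s C S UNIV R D f"
    and pr: "props E0 E1 s C S R D"
  shows "branching_system E0 E1 r s C S UNIV (\<lambda>e. g ` R e) (\<lambda>v. g ` D v) (\<lambda>e x. g (f e (inv g x)))
     \<and> props E0 E1 s C S (\<lambda>e. g ` R e) (\<lambda>v. g ` D v)"
proof
  have b1: "\<forall>Y\<in>sg_C E0 C. \<forall>d\<in>Y. \<forall>e\<in>Y. d \<noteq> e \<longrightarrow> R d \<inter> R e = {}"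
   and b2: "\<forall>v\<in>E0. \<forall>w\<in>E0. v \<noteq> w \<longrightarrow> D v \<inter> D w = {}"
   and b3: "\<forall>e\<in>E1. R e \<subseteq> D (s e)"
   and b4: "\<forall>v\<in>E0. \<forall>Y\<in>S. Y \<in> C v \<longrightarrow> D v = (\<Union>e\<in>Y. R e)"
   and b5: "\<forall>e\<in>E1. bij_betw (f e) (D (r e)) (R e)"
    using br unfolding branching_system_def by simp_all
  have bij: "bij_betw (\<lambda>x. g (f e (inv g x))) (g ` D (r e)) (g ` R e)" if e: "e \<in> E1" for e
  proof -
    have "bij_betw (f e) (D (r e)) (R e)" using b5 e by blast
    then have "bij_betw (f e \<circ> inv g) (g ` D (r e)) (R e)"
      using bij_inv_img[OF g] bij_betw_trans by blast
    moreover have "bij_betw g (R e) (g ` R e)" using inj_on_subset[OF g subset_UNIV] by (simp add: bij_betw_def)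
    ultimately have "bij_betw (g \<circ> (f e \<circ> inv g)) (g ` D (r e)) (g ` R e)"
      using bij_betw_trans by blast
    then show ?thesis by (simp add: comp_def)
  qed
  show "branching_system E0 E1 r s C S UNIV (\<lambda>e. g ` R e) (\<lambda>v. g ` D v) (\<lambda>e x. g (f e (inv g x)))"
    unfolding branching_system_def
  proof (intro conjI ballI impI)
    fix Y d e assume "Y \<in> sg_C E0 C" "d \<in> Y" "e \<in> Y" "d \<noteq> e"
    then have "R d \<inter> R e = {}" using b1 by blast
    then show "g ` R d \<inter> g ` R e = {}" using img_Int[OF g] by simp
  next
    fix v w assume "v \<in> E0" "w \<in> E0" "v \<noteq> w"
    then have "D v \<inter> D w = {}" using b2 by blast
    then show "g ` D v \<inter> g ` D w = {}" using img_Int[OF g] by simp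
  next
    fix e assume "e \<in> E1" then show "g ` R e \<subseteq> g ` D (s e)" using b3 by (simp add: image_mono)
  next
    fix v Y assume "v \<in> E0" "Y \<in> S" "Y \<in> C v"
    then show "g ` D v = (\<Union>e\<in>Y. g ` R e)" using b4 by (simp add: image_UN)
  next
    fix e assume "e \<in> E1" then show "bij_betw (\<lambda>x. g (f e (inv g x))) (g ` D (r e)) (g ` R e)" by (rule bij)
  qed auto
  have P: "nonsink E0 E1 s v \<Longrightarrow>
        (\<forall>Y1\<in>C v. \<forall>Y2\<in>C v. Y1 \<noteq> Y2 \<longrightarrow> (\<forall>e\<in>Y1. \<forall>e'\<in>Y2. R e \<inter> R e' \<noteq> {})) \<and>
        (\<forall>Y\<in>C v - S. (\<Union>e\<in>Y. R e) \<subset> D v) \<and>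
        (\<forall>Y1\<in>C v - S. \<forall>Y2\<in>C v - S. Y1 \<noteq> Y2 \<longrightarrow> (\<Union>e\<in>Y1. R e) \<noteq> (\<Union>e\<in>Y2. R e))" for v
    using pr unfolding props_def by (rule allE) (erule mp)
  show "props E0 E1 s C S (\<lambda>e. g ` R e) (\<lambda>v. g ` D v)"
    unfolding props_def
  proof (intro allI impI conjI ballI)
    fix v Y1 Y2 e e' assume ns: "nonsink E0 E1 s v" and Y: "Y1 \<in> C v" "Y2 \<in> C v" "Y1 \<noteq> Y2" "e \<in> Y1" "e' \<in> Y2"
    have "R e \<inter> R e' \<noteq> {}" using conjunct1[OF P[OF ns]] Y by simp
    then show "g ` R e \<inter> g ` R e' \<noteq> {}" using img_Int[OF g] by simp
  next
    fix v Y assume ns: "nonsink E0 E1 s v" and Y: "Y \<in> C v - S"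
    have "(\<Union>e\<in>Y. R e) \<subset> D v" using conjunct1[OF conjunct2[OF P[OF ns]]] Y by simp
    then have "g ` (\<Union>e\<in>Y. R e) \<subset> g ` D v" by (rule img_psub[OF g])
    then show "(\<Union>e\<in>Y. g ` R e) \<subset> g ` D v" by (simp add: image_UN)
  next
    fix v Y1 Y2 assume ns: "nonsink E0 E1 s v" and Y: "Y1 \<in> C v - S" "Y2 \<in> C v - S" "Y1 \<noteq> Y2"
    have "(\<Union>e\<in>Y1. R e) \<noteq> (\<Union>e\<in>Y2. R e)" using conjunct2[OF conjunct2[OF P[OF ns]]] Y by simp
    then have "g ` (\<Union>e\<in>Y1. R e) \<noteq> g ` (\<Union>e\<in>Y2. R e)" using inj_image_eq_iff[OF g] by simp
    then show "(\<Union>e\<in>Y1. g ` R e) \<noteq> (\<Union>e\<in>Y2. g ` R e)" by (simp add: image_UN)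
  qed
qed

locale cons =
  fixes E0 :: "'v set" and E1 :: "'e set" and r s :: "'e \<Rightarrow> 'v"
    and C :: "'v \<Rightarrow> 'e set set" and S :: "'e set set"
  assumes sep: "separated_graph E0 E1 r s C"
    and cE0: "countable E0" and cE1: "countable E1"
    and SC: "S \<subseteq> sg_Cfin E0 C"
begin

lemma sgf: "s ` E1 \<subseteq> E0" "\<forall>v. \<not> nonsink E0 E1 s v \<longrightarrow> C v = {}"
  "\<forall>v. nonsink E0 E1 s v \<longrightarrow> \<Union>(C v) = {e \<in> E1. s e = v} \<and>
        (\<forall>X\<in>C v. X \<noteq> {}) \<and>
        (\<forall>X\<in>C v. \<forall>Y\<in>C v. X \<noteq> Y \<longrightarrow> X \<inter> Y = {})"
  using sep unfolding separated_graph_def by simp_all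

lemma ns_of: "Y \<in> C v \<Longrightarrow> nonsink E0 E1 s v"
  using sgf(2) by fastforce

lemma sgv: "nonsink E0 E1 s v \<Longrightarrow> \<Union>(C v) = {e \<in> E1. s e = v}"
  "nonsink E0 E1 s v \<Longrightarrow> X \<in> C v \<Longrightarrow> X \<noteq> {}"
  "nonsink E0 E1 s v \<Longrightarrow> X \<in> C v \<Longrightarrow> Y \<in> C v \<Longrightarrow> X \<noteq> Y \<Longrightarrow> X \<inter> Y = {}"
  using sgf(3) by simp_all

lemma inC: "Y \<in> C v \<Longrightarrow> e \<in> Y \<Longrightarrow> s e = v \<and> e \<in> E1 \<and> v \<in> E0 \<and> nonsink E0 E1 s v"
proof -
  assume Y: "Y \<in> C v" and e: "e \<in> Y"
  have ns: "nonsink E0 E1 s v" by (rule ns_of[OF Y])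
  have "e \<in> \<Union>(C v)" using Y e by blast
  then have "e \<in> E1 \<and> s e = v" using sgv(1)[OF ns] by simp
  then show ?thesis using ns by (simp add: nonsink_def)
qed

lemma Cne: "Y \<in> C v \<Longrightarrow> Y \<noteq> {}"
  using sgv(2) ns_of by blast

lemma Cdisj: "Y1 \<in> C v \<Longrightarrow> Y2 \<in> C v \<Longrightarrow> e \<in> Y1 \<Longrightarrow> e \<in> Y2 \<Longrightarrow> Y1 = Y2"
  using sgv(3) ns_of by blast

lemma Ccount: "Y \<in> C v \<Longrightarrow> countable Y"
proof -
  assume Y: "Y \<in> C v"
  have "Y \<subseteq> E1" using inC[OF Y] by blast
  then show ?thesis using countable_subset cE1 by blast
qed

definition Yof :: "'e \<Rightarrow> 'e set" where
  "Yof e = (THE Y. Y \<in> C (s e) \<and> e \<in> Y)"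

lemma Yof_eq:
  assumes Y: "Y \<in> C v" and e: "e \<in> Y" shows "Yof e = Y"
proof -
  have se: "s e = v" using inC[OF Y e] by simp
  show ?thesis unfolding Yof_def se
  proof (rule the_equality)
    show "Y \<in> C v \<and> e \<in> Y" using Y e by simp
    fix Y' assume "Y' \<in> C v \<and> e \<in> Y'"
    then show "Y' = Y" using Cdisj[OF _ Y _ e] by blast
  qed
qed

lemma Yof_ex: "e \<in> E1 \<Longrightarrow> Yof e \<in> C (s e) \<and> e \<in> Yof e"
proof -
  assume e: "e \<in> E1"
  have ns: "nonsink E0 E1 s (s e)" using sgf(1) e unfolding nonsink_def by blast
  then have "\<Union>(C (s e)) = {e' \<in> E1. s e' = s e}" by (rule sgv(1))
  then obtain Y where Y: "Y \<in> C (s e)" "e \<in> Y" using e by blast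
  then show ?thesis using Yof_eq[OF Y] by simp
qed

definition ic :: "'e set \<Rightarrow> nat" where
  "ic Y = to_nat_on E1 (SOME e. e \<in> Y)"

lemma ic_inj: "Y1 \<in> C v \<Longrightarrow> Y2 \<in> C v \<Longrightarrow> ic Y1 = ic Y2 \<Longrightarrow> Y1 = Y2"
proof -
  assume Y1: "Y1 \<in> C v" and Y2: "Y2 \<in> C v" and eq: "ic Y1 = ic Y2"
  have s1: "(SOME e. e \<in> Y1) \<in> Y1" using Cne[OF Y1] by (simp add: some_in_eq)
  have s2: "(SOME e. e \<in> Y2) \<in> Y2" using Cne[OF Y2] by (simp add: some_in_eq)
  have inj: "inj_on (to_nat_on E1) E1" by (rule inj_on_to_nat_on[OF cE1])
  have i1: "(SOME e. e \<in> Y1) \<in> E1" using inC[OF Y1 s1] by simp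
  have i2: "(SOME e. e \<in> Y2) \<in> E1" using inC[OF Y2 s2] by simp
  have "(SOME e. e \<in> Y1) = (SOME e. e \<in> Y2)"
    using inj_onD[OF inj _ i1 i2] eq unfolding ic_def by simp
  then have "(SOME e. e \<in> Y1) \<in> Y2" using s2 by simp
  then show ?thesis using Cdisj[OF Y1 Y2 s1] by simp
qed

definition val :: "'e \<Rightarrow> nat" where
  "val e = (if Yof e \<in> S then to_nat_on (Yof e) e else to_nat_on (Yof e) e + 1)"

definition modf :: "'e set \<Rightarrow> nat \<Rightarrow> nat" where
  "modf Y m = (if Y \<in> S then m mod card Y else m)"

definition Ts :: "'e \<Rightarrow> nat list set" where
  "Ts e = {t. modf (Yof e) (getl t (ic (Yof e))) = val e}"

definition D' :: "'v \<Rightarrow> (nat \<times> nat list) set" where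
  "D' v = {to_nat_on E0 v} \<times> UNIV"

definition R' :: "'e \<Rightarrow> (nat \<times> nat list) set" where
  "R' e = {to_nat_on E0 (s e)} \<times> Ts e"

definition b :: "'e \<Rightarrow> nat \<times> nat list \<Rightarrow> nat \<times> nat list" where
  "b e = from_nat_into (R' e) \<circ> inv_into UNIV (from_nat_into (D' (r e)))"

lemma SY: "Y \<in> S \<Longrightarrow> finite Y"
  using SC by (auto simp: sg_Cfin_def)

lemma modf_val: "Y \<in> C v \<Longrightarrow> e \<in> Y \<Longrightarrow> modf Y (val e) = val e"
proof -
  assume Y: "Y \<in> C v" and e: "e \<in> Y"
  have "to_nat_on Y e < card Y" if "Y \<in> S"
    using to_nat_on_finite[OF SY[OF that]] e by (auto simp: bij_betw_def)
  then show ?thesis using Yof_eq[OF Y e] by (simp add: modf_def val_def)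
qed

lemma val_inj: "Y \<in> C v \<Longrightarrow> d \<in> Y \<Longrightarrow> e \<in> Y \<Longrightarrow> val d = val e \<Longrightarrow> d = e"
proof -
  assume Y: "Y \<in> C v" and d: "d \<in> Y" and e: "e \<in> Y" and eq: "val d = val e"
  have "to_nat_on Y d = to_nat_on Y e"
    using eq Yof_eq[OF Y d] Yof_eq[OF Y e] by (simp add: val_def split: if_splits)
  then show ?thesis using Ccount[OF Y] d e by (meson inj_on_to_nat_on inj_onD)
qed

lemma val_nz: "Y \<in> C v \<Longrightarrow> e \<in> Y \<Longrightarrow> Y \<notin> S \<Longrightarrow> val e \<noteq> 0"
  using Yof_eq by (simp add: val_def)

lemma Ts_iff: "Y \<in> C v \<Longrightarrow> e \<in> Y \<Longrightarrow> t \<in> Ts e \<longleftrightarrow> modf Y (getl t (ic Y)) = val e"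
  using Yof_eq by (simp add: Ts_def)

lemma Ts_wit: "Y \<in> C v \<Longrightarrow> e \<in> Y \<Longrightarrow> getl t (ic Y) = val e \<Longrightarrow> t \<in> Ts e"
  using Ts_iff modf_val by metis

lemma Ts_inf: "e \<in> E1 \<Longrightarrow> infinite (Ts e)"
proof -
  assume e: "e \<in> E1"
  obtain Y where Y: "Y \<in> C (s e)" "e \<in> Y" using Yof_ex[OF e] by blast
  let ?h = "\<lambda>n. mk (ic Y) (val e) (ic Y) (val e) n"
  have "inj ?h" by (rule injI) (metis length_mk add_left_cancel)
  then have "infinite (range ?h)" by (rule range_inj_infinite)
  moreover have "range ?h \<subseteq> Ts e" using Ts_wit[OF Y] getl_mk1 by blast
  ultimately show ?thesis using finite_subset by blast
qed

lemma pair_img: "{n} \<times> A = Pair n ` A" by auto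

lemma b_bij: "e \<in> E1 \<Longrightarrow> bij_betw (b e) (D' (r e)) (R' e)"
proof -
  assume e: "e \<in> E1"
  have iD: "infinite (D' (r e))" unfolding D'_def pair_img
    using finite_imageD infinite_UNIV_listI by (metis inj_on_def prod.inject)
  have iR: "infinite (R' e)" unfolding R'_def pair_img
    using finite_imageD Ts_inf[OF e] by (metis inj_on_def prod.inject)
  have c: "countable (A :: (nat \<times> nat list) set)" for A by simp
  have 1: "bij_betw (from_nat_into (D' (r e))) UNIV (D' (r e))" by (rule bij_betw_from_nat_into[OF c iD])
  have 2: "bij_betw (from_nat_into (R' e)) UNIV (R' e)" by (rule bij_betw_from_nat_into[OF c iR])
  show ?thesis unfolding b_def using bij_betw_trans[OF bij_betw_inv_into[OF 1] 2] .
qed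

lemma abs_bs: "branching_system E0 E1 r s C S UNIV R' D' b"
  unfolding branching_system_def
proof (intro conjI ballI impI)
  show "R' e \<subseteq> UNIV" "D' v \<subseteq> UNIV" for e v by auto
next
  fix Y d e assume Y: "Y \<in> sg_C E0 C" and d: "d \<in> Y" and e: "e \<in> Y" and de: "d \<noteq> e"
  from Y obtain v where v: "Y \<in> C v" by (auto simp: sg_C_def)
  show "R' d \<inter> R' e = {}"
    using Ts_iff[OF v d] Ts_iff[OF v e] val_inj[OF v d e] de by (auto simp: R'_def)
next
  fix v w assume "v \<in> E0" "w \<in> E0" "v \<noteq> w"
  then have "to_nat_on E0 v \<noteq> to_nat_on E0 w" using cE0 by (meson inj_on_to_nat_on inj_onD)
  then show "D' v \<inter> D' w = {}" by (auto simp: D'_def)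
next
  fix e show "R' e \<subseteq> D' (s e)" by (auto simp: R'_def D'_def)
next
  fix v Y assume v: "v \<in> E0" and YS: "Y \<in> S" and Y: "Y \<in> C v"
  have fY: "finite Y" by (rule SY[OF YS])
  have cp: "card Y > 0" using fY Cne[OF Y] by (simp add: card_gt_0_iff)
  show "D' v = (\<Union>e\<in>Y. R' e)"
  proof
    show "(\<Union>e\<in>Y. R' e) \<subseteq> D' v" using inC[OF Y] by (auto simp: R'_def D'_def)
    show "D' v \<subseteq> (\<Union>e\<in>Y. R' e)"
    proof
      fix p assume "p \<in> D' v"
      then obtain t where p: "p = (to_nat_on E0 v, t)" by (auto simp: D'_def)
      let ?m = "getl t (ic Y) mod card Y"
      have "?m \<in> to_nat_on Y ` Y" using to_nat_on_finite[OF fY] cp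
        by (simp add: bij_betw_def)
      then obtain e where e: "e \<in> Y" "to_nat_on Y e = ?m" by auto
      have "t \<in> Ts e" using Ts_iff[OF Y e(1)] e Yof_eq[OF Y e(1)] YS
        by (simp add: modf_def val_def)
      then show "p \<in> (\<Union>e\<in>Y. R' e)" using e inC[OF Y e(1)] p by (auto simp: R'_def)
    qed
  qed
next
  fix e assume "e \<in> E1" then show "bij_betw (b e) (D' (r e)) (R' e)" by (rule b_bij)
qed

lemma abs_props: "props E0 E1 s C S R' D'"
  unfolding props_def
proof (intro allI impI conjI ballI)
  fix v Y1 Y2 e e' assume Y1: "Y1 \<in> C v" and Y2: "Y2 \<in> C v" and ne: "Y1 \<noteq> Y2"
    and e: "e \<in> Y1" and e': "e' \<in> Y2"
  have k: "ic Y1 \<noteq> ic Y2" using ic_inj[OF Y1 Y2] ne by blast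
  let ?t = "mk (ic Y1) (val e) (ic Y2) (val e') 0"
  have "?t \<in> Ts e" by (rule Ts_wit[OF Y1 e]) (simp add: getl_mk1)
  moreover have "?t \<in> Ts e'" by (rule Ts_wit[OF Y2 e']) (simp add: getl_mk2[OF k])
  ultimately have "(to_nat_on E0 v, ?t) \<in> R' e \<inter> R' e'"
    using inC[OF Y1 e] inC[OF Y2 e'] by (auto simp: R'_def)
  then show "R' e \<inter> R' e' \<noteq> {}" by blast
next
  fix v Y assume "Y \<in> C v - S"
  then have Y: "Y \<in> C v" and YS: "Y \<notin> S" by auto
  have sub: "(\<Union>e\<in>Y. R' e) \<subseteq> D' v" using inC[OF Y] by (auto simp: R'_def D'_def)
  have "(to_nat_on E0 v, []) \<notin> (\<Union>e\<in>Y. R' e)"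
    using Ts_iff[OF Y] val_nz[OF Y _ YS] YS by (auto simp: R'_def getl_Nil modf_def)
  moreover have "(to_nat_on E0 v, []) \<in> D' v" by (simp add: D'_def)
  ultimately show "(\<Union>e\<in>Y. R' e) \<subset> D' v" using sub by blast
next
  fix v Y1 Y2 assume "Y1 \<in> C v - S" "Y2 \<in> C v - S" and ne: "Y1 \<noteq> Y2"
  then have Y1: "Y1 \<in> C v" and Y2: "Y2 \<in> C v" and S2: "Y2 \<notin> S" by auto
  obtain e0 where e0: "e0 \<in> Y1" using Cne[OF Y1] by blast
  have k: "ic Y1 \<noteq> ic Y2" using ic_inj[OF Y1 Y2] ne by blast
  let ?t = "mk (ic Y1) (val e0) (ic Y2) 0 0"
  have "?t \<in> Ts e0" by (rule Ts_wit[OF Y1 e0]) (simp add: getl_mk1)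
  then have in1: "(to_nat_on E0 v, ?t) \<in> (\<Union>e\<in>Y1. R' e)"
    using e0 inC[OF Y1 e0] by (auto simp: R'_def)
  have "(to_nat_on E0 v, ?t) \<notin> (\<Union>e\<in>Y2. R' e)"
    using Ts_iff[OF Y2] val_nz[OF Y2 _ S2] S2 getl_mk2[OF k] by (auto simp: R'_def modf_def)
  then show "(\<Union>e\<in>Y1. R' e) \<noteq> (\<Union>e\<in>Y2. R' e)" using in1 by blast
qed

end


theorem corollary3p4:
  fixes E0 :: "'v set" and E1 :: "'e set" and r s :: "'e \<Rightarrow> 'v"
    and C :: "'v \<Rightarrow> 'e set set" and S :: "'e set set"
  assumes "separated_graph E0 E1 r s C"
    and "countable E0" and "countable E1"
    and "S \<subseteq> sg_Cfin E0 C"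
  shows "\<exists>(X :: real set) R D f (\<pi> :: (('v, 'e) clgen list \<Rightarrow> 'k::field) set
             \<Rightarrow> (real \<Rightarrow> 'k) \<Rightarrow> (real \<Rightarrow> 'k)).
     is_interval X \<and> interior X \<noteq> {} \<and>
     branching_system E0 E1 r s C S X R D f \<and>
     (\<forall>v. nonsink E0 E1 s v \<longrightarrow>
        (\<forall>Y1\<in>C v. \<forall>Y2\<in>C v. Y1 \<noteq> Y2 \<longrightarrow> (\<forall>e\<in>Y1. \<forall>e'\<in>Y2. R e \<inter> R e' \<noteq> {})) \<and>
        (\<forall>Y\<in>C v - S. (\<Union>e\<in>Y. R e) \<subset> D v) \<and>
        (\<forall>Y1\<in>C v - S. \<forall>Y2\<in>C v - S. Y1 \<noteq> Y2 \<longrightarrow> (\<Union>e\<in>Y1. R e) \<noteq> (\<Union>e\<in>Y2. R e))) \<and>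
     CL_hom E0 E1 r s C S X \<pi> \<and>
     (\<forall>\<phi>\<in>fun_module X.
        (\<forall>v\<in>E0. \<pi> (CL_class E0 E1 r s C S (mon [GV v])) \<phi> =
                   (\<lambda>x. if x \<in> D v then \<phi> x else 0)) \<and>
        (\<forall>e\<in>E1. \<pi> (CL_class E0 E1 r s C S (mon [GE e])) \<phi> =
                   (\<lambda>x. if x \<in> R e then \<phi> (the_inv_into (D (r e)) (f e) x) else 0)) \<and>
        (\<forall>e\<in>E1. \<pi> (CL_class E0 E1 r s C S (mon [GS e])) \<phi> =
                   (\<lambda>x. if x \<in> D (r e) then \<phi> (f e x) else 0)))"
proof -
  interpret cons E0 E1 r s C S using assms by unfold_locales
  define g :: "nat \<times> nat list \<Rightarrow> real" where "g = (\<lambda>p. real (to_nat p))"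
  have g: "inj g" unfolding g_def by (rule injI) (simp add: injD[OF inj_to_nat])
  have T: "branching_system E0 E1 r s C S UNIV (\<lambda>e. g ` R' e) (\<lambda>v. g ` D' v) (\<lambda>e x. g (b e (inv g x)))
     \<and> props E0 E1 s C S (\<lambda>e. g ` R' e) (\<lambda>v. g ` D' v)"
    by (rule transport[OF g abs_bs abs_props])
  then have BS: "branching_system E0 E1 r s C S UNIV (\<lambda>e. g ` R' e) (\<lambda>v. g ` D' v) (\<lambda>e x. g (b e (inv g x)))"
    and PR: "props E0 E1 s C S (\<lambda>e. g ` R' e) (\<lambda>v. g ` D' v)" by simp_all
  interpret B: bs E0 E1 r s C S "\<lambda>v. g ` D' v" "\<lambda>e. g ` R' e" "\<lambda>e x. g (b e (inv g x))"
    using assms(1,4) BS by unfold_locales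
  obtain \<pi> :: "(('v, 'e) clgen list \<Rightarrow> 'k::field) set \<Rightarrow> (real \<Rightarrow> 'k) \<Rightarrow> (real \<Rightarrow> 'k)"
    where pi: "CL_hom E0 E1 r s C S UNIV \<pi>"
     "\<forall>\<phi>\<in>fun_module UNIV.
        (\<forall>v\<in>E0. \<pi> (CL_class E0 E1 r s C S (mon [GV v])) \<phi> =
                   (\<lambda>x. if x \<in> g ` D' v then \<phi> x else 0)) \<and>
        (\<forall>e\<in>E1. \<pi> (CL_class E0 E1 r s C S (mon [GE e])) \<phi> =
                   (\<lambda>x. if x \<in> g ` R' e then \<phi> (the_inv_into (g ` D' (r e)) (\<lambda>x. g (b e (inv g x))) x) else 0)) \<and>
        (\<forall>e\<in>E1. \<pi> (CL_class E0 E1 r s C S (mon [GS e])) \<phi> =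
                   (\<lambda>x. if x \<in> g ` D' (r e) then \<phi> (g (b e (inv g x))) else 0))"
    using B.rep_main by blast
  have I: "is_interval (UNIV :: real set)" by (simp add: is_interval_univ)
  have N: "interior (UNIV :: real set) \<noteq> {}" by simp
  show ?thesis
    apply (rule exI[of _ UNIV], rule exI[of _ "\<lambda>e. g ` R' e"], rule exI[of _ "\<lambda>v. g ` D' v"],
           rule exI[of _ "\<lambda>e x. g (b e (inv g x))"], rule exI[of _ \<pi>])
    using I N BS PR pi unfolding props_def by simp
qed

end
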